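(* Let $d\ge1$, $n\ge d+2$, and let $T$ be a $d$-hypertree in $K_n^d$. Then the facet graph $G_d(T)$ is $d$-connected.
   Context: Fix a field $\mathbb F$. A $d$-simplex is a $(d+1)$-element subset of $[n]$ oriented by increasing order; $K_n^d$ is the complex of all subsets of $[n]$ of size at most $d+1$. A $d$-chain is a formal $\mathbb F$-combination of $d$-simplices with boundary $\partial\{s_1<\dots<s_{d+1}\}=\sum_i(-1)^{i-1}(\sigma\setminus\{s_i\})$ extended linearly; a $d$-cycle is a chain with $\partial Z=0$. A set of $d$-simplices is acyclic if it supports no nonzero $d$-cycle; a $d$-hypertree is a maximal acyclic set of $d$-simplices of $K_n^d$. The facet graph $G_d(T)$ has vertex set $T$, two $d$-simplices adjacent iff they share a $(d-1)$-face. A graph is $k$-connected if deleting any set of fewer than $k$ of its vertices leaves a nonempty connected graph. *)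

theory Defs
  imports Main
begin

definition simplices :: "nat \<Rightarrow> nat \<Rightarrow> nat set set" where
  "simplices n d = {\<sigma>. \<sigma> \<subseteq> {1..n} \<and> card \<sigma> = d + 1}"

text \<open>Sign of the face sigma minus {v}: (-1)^(i-1) where v is the i-th smallest element of sigma.\<close>
definition face_sign :: "nat set \<Rightarrow> nat \<Rightarrow> 'a::field" where
  "face_sign \<sigma> v = (-1) ^ card {x\<in>\<sigma>. x < v}"

text \<open>A d-chain is a function from d-simplices of K_n^d to the field (zero outside).
  Its boundary evaluated at a (d-1)-simplex tau.\<close>
definition boundary :: "nat \<Rightarrow> nat \<Rightarrow> (nat set \<Rightarrow> 'a::field) \<Rightarrow> nat set \<Rightarrow> 'a" where
  "boundary n d c \<tau> =
     (\<Sum>\<sigma>\<in>{\<sigma>\<in>simplices n d. \<tau> \<subset> \<sigma>}. face_sign \<sigma> (the_elem (\<sigma> - \<tau>)) * c \<sigma>)"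

definition is_cycle :: "nat \<Rightarrow> nat \<Rightarrow> (nat set \<Rightarrow> 'a::field) \<Rightarrow> bool" where
  "is_cycle n d c \<longleftrightarrow> (\<forall>\<tau>. \<tau> \<subseteq> {1..n} \<and> card \<tau> = d \<longrightarrow> boundary n d c \<tau> = 0)"

definition acyclic_set :: "'a::field itself \<Rightarrow> nat \<Rightarrow> nat \<Rightarrow> nat set set \<Rightarrow> bool" where
  "acyclic_set (_::'a itself) n d S \<longleftrightarrow> S \<subseteq> simplices n d \<and>
     \<not> (\<exists>c :: nat set \<Rightarrow> 'a. (\<forall>\<sigma>. \<sigma> \<notin> S \<longrightarrow> c \<sigma> = 0) \<and> (\<exists>\<sigma>. c \<sigma> \<noteq> 0) \<and> is_cycle n d c)"

definition hypertree :: "'a::field itself \<Rightarrow> nat \<Rightarrow> nat \<Rightarrow> nat set set \<Rightarrow> bool" where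
  "hypertree F n d T \<longleftrightarrow> acyclic_set F n d T \<and>
     (\<forall>S. T \<subset> S \<and> S \<subseteq> simplices n d \<longrightarrow> \<not> acyclic_set F n d S)"

definition facet_adj :: "nat \<Rightarrow> nat set \<Rightarrow> nat set \<Rightarrow> bool" where
  "facet_adj d \<sigma> \<tau> \<longleftrightarrow> \<sigma> \<noteq> \<tau> \<and> card (\<sigma> \<inter> \<tau>) = d"

definition graph_connected :: "'v set \<Rightarrow> ('v \<Rightarrow> 'v \<Rightarrow> bool) \<Rightarrow> bool" where
  "graph_connected W E \<longleftrightarrow>
     (\<forall>u\<in>W. \<forall>v\<in>W. (u, v) \<in> {(x, y). x \<in> W \<and> y \<in> W \<and> E x y}\<^sup>*)"

definition k_connected :: "'v set \<Rightarrow> ('v \<Rightarrow> 'v \<Rightarrow> bool) \<Rightarrow> nat \<Rightarrow> bool" where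
  "k_connected V E k \<longleftrightarrow>
     (\<forall>X. X \<subseteq> V \<and> finite X \<and> card X < k \<longrightarrow> V - X \<noteq> {} \<and> graph_connected (V - X) E)"

end

theory Submission imports Defs begin


definition smp :: "nat set \<Rightarrow> nat \<Rightarrow> nat set set" where
  "smp V d = {\<sigma>. \<sigma> \<subseteq> V \<and> card \<sigma> = Suc d}"

definition cob :: "(nat set \<Rightarrow> 'a::field) \<Rightarrow> nat set \<Rightarrow> 'a" where
  "cob f \<sigma> = (\<Sum>v\<in>\<sigma>. face_sign \<sigma> v * f (\<sigma> - {v}))"

definition spanning :: "'a::field itself \<Rightarrow> nat set \<Rightarrow> nat \<Rightarrow> nat set set \<Rightarrow> bool" where
  "spanning F V d S \<longleftrightarrow> S \<subseteq> smp V d \<and>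
     (\<forall>f::nat set \<Rightarrow> 'a. (\<forall>\<sigma>\<in>S. cob f \<sigma> = 0) \<longrightarrow> (\<forall>\<sigma>\<in>smp V d. cob f \<sigma> = 0))"

lemma finite_simplices: "finite (simplices n d)"
  unfolding simplices_def by (rule finite_subset[of _ "Pow {1..n}"]) auto

lemma pairing:
  fixes c f :: "nat set \<Rightarrow> 'a::field"
  shows "(\<Sum>\<sigma>\<in>simplices n d. c \<sigma> * cob f \<sigma>) =
         (\<Sum>\<tau>\<in>{\<tau>. \<tau> \<subseteq> {1..n} \<and> card \<tau> = d}. f \<tau> * boundary n d c \<tau>)"
proof -
  let ?SS = "simplices n d" and ?FF = "{\<tau>. \<tau> \<subseteq> {1..n} \<and> card \<tau> = d}"
  have fSS: "finite ?SS" by (rule finite_simplices)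
  have fFF: "finite ?FF" by (rule finite_subset[of _ "Pow {1..n}"]) auto
  have finel: "\<sigma> \<in> ?SS \<Longrightarrow> finite \<sigma>" for \<sigma>
    unfolding simplices_def using finite_subset by auto
  have "(\<Sum>\<sigma>\<in>?SS. c \<sigma> * cob f \<sigma>) = (\<Sum>\<sigma>\<in>?SS. \<Sum>v\<in>\<sigma>. c \<sigma> * (face_sign \<sigma> v * f (\<sigma> - {v})))"
    unfolding cob_def by (simp add: sum_distrib_left)
  also have "\<dots> = (\<Sum>(\<sigma>,v)\<in>Sigma ?SS (\<lambda>\<sigma>. \<sigma>). c \<sigma> * (face_sign \<sigma> v * f (\<sigma> - {v})))"
    by (rule sum.Sigma) (use fSS finel in auto)
  also have "\<dots> = (\<Sum>(\<tau>,\<sigma>)\<in>Sigma ?FF (\<lambda>\<tau>. {\<sigma>\<in>?SS. \<tau> \<subset> \<sigma>}). f \<tau> * (face_sign \<sigma> (the_elem (\<sigma> - \<tau>)) * c \<sigma>))"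
  proof (rule sum.reindex_bij_witness[where i="\<lambda>(\<tau>,\<sigma>). (\<sigma>, the_elem (\<sigma> - \<tau>))" and j="\<lambda>(\<sigma>,v). (\<sigma> - {v}, \<sigma>)"])
    fix a assume a: "a \<in> Sigma ?SS (\<lambda>\<sigma>. \<sigma>)"
    then obtain \<sigma> v where [simp]: "a = (\<sigma>, v)" and s: "\<sigma> \<in> ?SS" and v: "v \<in> \<sigma>" by auto
    have e: "\<sigma> - (\<sigma> - {v}) = {v}" using v by auto
    show "(case case a of (\<sigma>, v) \<Rightarrow> (\<sigma> - {v}, \<sigma>) of (\<tau>, \<sigma>) \<Rightarrow> (\<sigma>, the_elem (\<sigma> - \<tau>))) = a"
      using e by simp
    show "(case a of (\<sigma>, v) \<Rightarrow> (\<sigma> - {v}, \<sigma>)) \<in> Sigma ?FF (\<lambda>\<tau>. {\<sigma>\<in>?SS. \<tau> \<subset> \<sigma>})"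
      using s v finel[OF s] by (auto simp: simplices_def)
    show "(case case a of (\<sigma>, v) \<Rightarrow> (\<sigma> - {v}, \<sigma>) of (\<tau>, \<sigma>) \<Rightarrow> f \<tau> * (face_sign \<sigma> (the_elem (\<sigma> - \<tau>)) * c \<sigma>)) =
          (case a of (\<sigma>, v) \<Rightarrow> c \<sigma> * (face_sign \<sigma> v * f (\<sigma> - {v})))"
      using e by simp
  next
    fix b assume b: "b \<in> Sigma ?FF (\<lambda>\<tau>. {\<sigma>\<in>?SS. \<tau> \<subset> \<sigma>})"
    then obtain \<tau> \<sigma> where [simp]: "b = (\<tau>, \<sigma>)" and t: "\<tau> \<in> ?FF" and s: "\<sigma> \<in> ?SS" and ts: "\<tau> \<subset> \<sigma>" by auto
    have fs: "finite \<sigma>" using finel[OF s] .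
    have "card (\<sigma> - \<tau>) = 1" using t s ts fs by (subst card_Diff_subset) (auto simp: simplices_def dest: finite_subset)
    then obtain u where u: "\<sigma> - \<tau> = {u}" by (auto simp: card_Suc_eq)
    have "\<sigma> - {u} = \<tau>" using u ts by auto
    then show "(case case b of (\<tau>, \<sigma>) \<Rightarrow> (\<sigma>, the_elem (\<sigma> - \<tau>)) of (\<sigma>, v) \<Rightarrow> (\<sigma> - {v}, \<sigma>)) = b"
      using u by simp
    show "(case b of (\<tau>, \<sigma>) \<Rightarrow> (\<sigma>, the_elem (\<sigma> - \<tau>))) \<in> Sigma ?SS (\<lambda>\<sigma>. \<sigma>)"
      using u s by auto
  qed
  also have "\<dots> = (\<Sum>\<tau>\<in>?FF. \<Sum>\<sigma>\<in>{\<sigma>\<in>?SS. \<tau> \<subset> \<sigma>}. f \<tau> * (face_sign \<sigma> (the_elem (\<sigma> - \<tau>)) * c \<sigma>))"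
    by (rule sum.Sigma[symmetric]) (use fFF fSS in auto)
  also have "\<dots> = (\<Sum>\<tau>\<in>?FF. f \<tau> * boundary n d c \<tau>)"
    unfolding boundary_def by (simp add: sum_distrib_left)
  finally show ?thesis .
qed

lemma hypertree_spanning:
  assumes H: "hypertree (TYPE('a::field)) n d T"
  shows "spanning (TYPE('a)) {1..n} d T"
proof -
  have smp_eq: "smp {1..n} d = simplices n d" by (auto simp: smp_def simplices_def)
  have TS: "T \<subseteq> simplices n d" using H by (auto simp: hypertree_def acyclic_set_def)
  show ?thesis unfolding spanning_def smp_eq
  proof (intro conjI TS allI impI ballI)
    fix f :: "nat set \<Rightarrow> 'a" and \<sigma>0 assume fT: "\<forall>\<sigma>\<in>T. cob f \<sigma> = 0" and s0: "\<sigma>0 \<in> simplices n d"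
    show "cob f \<sigma>0 = 0"
    proof (cases "\<sigma>0 \<in> T")
      case True then show ?thesis using fT by auto
    next
      case False
      have "T \<subset> insert \<sigma>0 T" "insert \<sigma>0 T \<subseteq> simplices n d" using False s0 TS by auto
      then have "\<not> acyclic_set TYPE('a) n d (insert \<sigma>0 T)" using H unfolding hypertree_def by blast
      then obtain c :: "nat set \<Rightarrow> 'a" where c0: "\<forall>\<sigma>. \<sigma> \<notin> insert \<sigma>0 T \<longrightarrow> c \<sigma> = 0"
        and cnz: "\<exists>\<sigma>. c \<sigma> \<noteq> 0" and cyc: "is_cycle n d c"
        using \<open>insert \<sigma>0 T \<subseteq> simplices n d\<close> unfolding acyclic_set_def by blast
      have "c \<sigma>0 \<noteq> 0"
      proof
        assume "c \<sigma>0 = 0"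
        then have "\<forall>\<sigma>. \<sigma> \<notin> T \<longrightarrow> c \<sigma> = 0" using c0 by auto
        then show False using H cnz cyc unfolding hypertree_def acyclic_set_def by blast
      qed
      have "(\<Sum>\<sigma>\<in>simplices n d. c \<sigma> * cob f \<sigma>) = 0"
        unfolding pairing using cyc unfolding is_cycle_def by (auto intro!: sum.neutral)
      moreover have "(\<Sum>\<sigma>\<in>simplices n d. c \<sigma> * cob f \<sigma>) = c \<sigma>0 * cob f \<sigma>0"
      proof -
        have "(\<Sum>\<sigma>\<in>simplices n d. c \<sigma> * cob f \<sigma>) = c \<sigma>0 * cob f \<sigma>0 + (\<Sum>\<sigma>\<in>simplices n d - {\<sigma>0}. c \<sigma> * cob f \<sigma>)"
          by (rule sum.remove[OF finite_simplices s0])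
        also have "(\<Sum>\<sigma>\<in>simplices n d - {\<sigma>0}. c \<sigma> * cob f \<sigma>) = 0"
          by (rule sum.neutral) (use c0 fT in auto)
        finally show ?thesis by simp
      qed
      ultimately show ?thesis using \<open>c \<sigma>0 \<noteq> 0\<close> by simp
    qed
  qed
qed




definition link :: "nat \<Rightarrow> nat set set \<Rightarrow> nat set set" where
  "link v S = (\<lambda>\<sigma>. \<sigma> - {v}) ` {\<sigma>\<in>S. v\<in>\<sigma>}"

definition lift :: "nat \<Rightarrow> (nat set \<Rightarrow> 'a::field) \<Rightarrow> nat set \<Rightarrow> 'a" where
  "lift v f \<tau> = (if v \<in> \<tau> then (-1) ^ card {x\<in>\<tau>. x < v} * f (\<tau> - {v}) else 0)"

lemma card_less_insert:
  assumes "finite A" "v \<notin> A"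
  shows "card {x\<in>insert v A. x < u} = card {x\<in>A. x < u} + (if v < u then 1 else 0)"
proof -
  have "{x\<in>insert v A. x < u} = (if v < u then insert v {x\<in>A. x < u} else {x\<in>A. x < u})" by auto
  then show ?thesis using assms by auto
qed

lemma cob_lift:
  fixes f :: "nat set \<Rightarrow> 'a::field"
  assumes fin: "finite \<sigma>" and v: "v \<notin> \<sigma>"
  shows "cob (lift v f) (insert v \<sigma>) = - ((-1) ^ card {x\<in>\<sigma>. x < v}) * cob f \<sigma>"
proof -
  have t0: "face_sign (insert v \<sigma>) v * lift v f (insert v \<sigma> - {v}) = 0"
    using v by (simp add: lift_def)
  have tu: "face_sign (insert v \<sigma>) u * lift v f (insert v \<sigma> - {u}) =
            - ((-1) ^ card {x\<in>\<sigma>. x < v}) * (face_sign \<sigma> u * f (\<sigma> - {u}))" if u: "u \<in> \<sigma>" for u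
  proof -
    have uv: "u \<noteq> v" using u v by auto
    have e1: "insert v \<sigma> - {u} = insert v (\<sigma> - {u})" using uv by auto
    have e2: "insert v (\<sigma> - {u}) - {v} = \<sigma> - {u}" using v by auto
    have c1: "card {x\<in>insert v (\<sigma> - {u}). x < v} = card {x\<in>\<sigma> - {u}. x < v}"
      using card_less_insert[of "\<sigma> - {u}" v v] fin v by auto
    have c2: "card {x\<in>\<sigma>. x < v} = card {x\<in>\<sigma> - {u}. x < v} + (if u < v then 1 else 0)"
      using card_less_insert[of "\<sigma> - {u}" u v] fin u by (simp add: insert_absorb)
    have c3: "card {x\<in>insert v \<sigma>. x < u} = card {x\<in>\<sigma>. x < u} + (if v < u then 1 else 0)"
      using card_less_insert[of \<sigma> v u] fin v by auto
    show ?thesis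
      unfolding face_sign_def lift_def e1 e2 c1 c2 c3 using uv
      by (cases "u < v") (auto simp: power_add)
  qed
  have "cob (lift v f) (insert v \<sigma>) = (\<Sum>u\<in>\<sigma>. face_sign (insert v \<sigma>) u * lift v f (insert v \<sigma> - {u}))"
    unfolding cob_def using fin v t0 by simp
  also have "\<dots> = (\<Sum>u\<in>\<sigma>. - ((-1) ^ card {x\<in>\<sigma>. x < v}) * (face_sign \<sigma> u * f (\<sigma> - {u})))"
    by (rule sum.cong) (use tu in auto)
  also have "\<dots> = - ((-1) ^ card {x\<in>\<sigma>. x < v}) * cob f \<sigma>"
    unfolding cob_def by (simp add: sum_distrib_left)
  finally show ?thesis .
qed

lemma cob_lift_notin:
  assumes "v \<notin> \<sigma>"
  shows "cob (lift v f) \<sigma> = 0"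
  unfolding cob_def lift_def using assms by (auto intro!: sum.neutral)

lemma smp_finite: "\<sigma> \<in> smp V d \<Longrightarrow> finite \<sigma>"
  unfolding smp_def by (auto intro: card_ge_0_finite)

lemma link_spanning:
  assumes sp: "spanning (TYPE('a::field)) V (Suc k) S" and vV: "v \<in> V"
  shows "spanning (TYPE('a)) (V - {v}) k (link v S)"
proof -
  have SS: "S \<subseteq> smp V (Suc k)" using sp by (simp add: spanning_def)
  have LS: "link v S \<subseteq> smp (V - {v}) k"
  proof
    fix \<tau> assume "\<tau> \<in> link v S"
    then obtain \<sigma> where s: "\<sigma> \<in> S" "v \<in> \<sigma>" and t: "\<tau> = \<sigma> - {v}" by (auto simp: link_def)
    have "finite \<sigma>" using SS s smp_finite by blast
    then show "\<tau> \<in> smp (V - {v}) k" using SS s t by (auto simp: smp_def)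
  qed
  show ?thesis unfolding spanning_def
  proof (intro conjI LS allI impI ballI)
    fix f :: "nat set \<Rightarrow> 'a" and \<tau> assume fL: "\<forall>\<tau>\<in>link v S. cob f \<tau> = 0" and t: "\<tau> \<in> smp (V - {v}) k"
    have "\<forall>\<sigma>\<in>S. cob (lift v f) \<sigma> = 0"
    proof
      fix \<sigma> assume s: "\<sigma> \<in> S"
      show "cob (lift v f) \<sigma> = 0"
      proof (cases "v \<in> \<sigma>")
        case True
        have fs: "finite (\<sigma> - {v})" using SS s smp_finite by blast
        have "\<sigma> - {v} \<in> link v S" using s True by (auto simp: link_def)
        then have "cob f (\<sigma> - {v}) = 0" using fL by blast
        moreover have "\<sigma> = insert v (\<sigma> - {v})" using True by auto
        ultimately show ?thesis using cob_lift[OF fs, of v f] by simp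
      qed (simp add: cob_lift_notin)
    qed
    then have all: "\<forall>\<sigma>\<in>smp V (Suc k). cob (lift v f) \<sigma> = 0" using sp by (auto simp: spanning_def)
    have ft: "finite \<tau>" using t smp_finite by blast
    have vt: "v \<notin> \<tau>" using t by (auto simp: smp_def)
    have "insert v \<tau> \<in> smp V (Suc k)" using t ft vt vV by (auto simp: smp_def)
    then have "cob (lift v f) (insert v \<tau>) = 0" using all by blast
    then show "cob f \<tau> = 0" using cob_lift[OF ft vt, of f] by simp
  qed
qed




lemma finite_smp: "finite V \<Longrightarrow> finite (smp V d)"
  unfolding smp_def by (rule finite_subset[of _ "Pow V"]) auto

lemma card_star: "card {\<sigma>\<in>S. w\<in>\<sigma>} = card (link w S)"
  unfolding link_def by (rule card_image[symmetric]) (auto simp: inj_on_def)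

lemma spanning_finite: "spanning F V d S \<Longrightarrow> finite V \<Longrightarrow> finite S"
  unfolding spanning_def using finite_smp finite_subset by blast

lemma count:
  assumes "spanning (TYPE('a::field)) V k S" "finite V" "card V \<ge> k + 2"
  shows "card S \<ge> k + 1"
  using assms
proof (induction k arbitrary: V S)
  case 0
  then obtain v where v: "v \<in> V" by fastforce
  have fS: "finite S" using spanning_finite 0 by blast
  have "S \<noteq> {}"
  proof
    assume "S = {}"
    then have "\<forall>\<sigma>\<in>smp V 0. cob (\<lambda>_. 1::'a) \<sigma> = 0" using 0 by (simp add: spanning_def)
    moreover have "{v} \<in> smp V 0" using v by (simp add: smp_def)
    ultimately have "cob (\<lambda>_. 1::'a) {v} = 0" by blast
    then show False by (simp add: cob_def face_sign_def)
  qed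
  then show ?case using fS by (simp add: Suc_le_eq card_gt_0_iff)
next
  case (Suc k)
  have fS: "finite S" using spanning_finite Suc.prems by blast
  have SS: "S \<subseteq> smp V (Suc k)" using Suc.prems by (simp add: spanning_def)
  have st: "card {\<sigma>\<in>S. w\<in>\<sigma>} \<ge> k + 1" if w: "w \<in> V" for w
  proof -
    have "spanning TYPE('a) (V - {w}) k (link w S)" using link_spanning Suc.prems w by blast
    moreover have "card (V - {w}) \<ge> k + 2" using Suc.prems w by auto
    ultimately have "card (link w S) \<ge> k + 1" using Suc.IH Suc.prems by blast
    then show ?thesis by (simp add: card_star)
  qed
  have "card V * (k + 1) \<le> (\<Sum>w\<in>V. card {\<sigma>\<in>S. w\<in>\<sigma>})"
    using sum_mono[of V "\<lambda>_. k + 1" "\<lambda>w. card {\<sigma>\<in>S. w\<in>\<sigma>}"] st by simp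
  also have "\<dots> = (\<Sum>w\<in>V. \<Sum>\<sigma>\<in>S. if w \<in> \<sigma> then 1 else 0)"
    by (rule sum.cong) (use fS in \<open>auto simp: sum.If_cases Int_def\<close>)
  also have "\<dots> = (\<Sum>\<sigma>\<in>S. \<Sum>w\<in>V. if w \<in> \<sigma> then 1 else 0)" by (rule sum.swap)
  also have "\<dots> = (\<Sum>\<sigma>\<in>S. card \<sigma>)"
  proof (rule sum.cong)
    fix \<sigma> assume "\<sigma> \<in> S"
    then have "\<sigma> \<subseteq> V" using SS by (auto simp: smp_def)
    then have "V \<inter> {w. w \<in> \<sigma>} = \<sigma>" by auto
    then show "(\<Sum>w\<in>V. if w \<in> \<sigma> then 1 else 0) = card \<sigma>"
      using Suc.prems(2) by (simp add: sum.If_cases)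
  qed simp
  also have "\<dots> = (\<Sum>\<sigma>\<in>S. Suc (Suc k))"
    by (rule sum.cong) (use SS in \<open>auto simp: smp_def\<close>)
  also have "\<dots> = card S * (k + 2)" by simp
  finally have A: "card V * (k + 1) \<le> card S * (k + 2)" .
  have B: "(k + 3) * (k + 1) \<le> card V * (k + 1)" using Suc.prems(3) by (intro mult_right_mono) auto
  show ?case
  proof (rule ccontr)
    assume "\<not> Suc k + 1 \<le> card S"
    then have "card S \<le> k + 1" by simp
    then have "card S * (k + 2) \<le> (k + 1) * (k + 2)" by (rule mult_right_mono) simp
    with A B show False by (simp add: algebra_simps)
  qed
qed

lemma cov:
  assumes sp: "spanning (TYPE('a::field)) V (Suc k) S" and fV: "finite V" and cV: "card V \<ge> k + 3"
    and XS: "X \<subseteq> S" and cX: "card X \<le> k" and w: "w \<in> V"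
  shows "\<exists>\<sigma>\<in>S - X. w \<in> \<sigma>"
proof (rule ccontr)
  assume "\<not> ?thesis"
  then have sub: "{\<sigma>\<in>S. w\<in>\<sigma>} \<subseteq> X" by auto
  have fX: "finite X" using XS spanning_finite[OF sp fV] finite_subset by blast
  have "spanning TYPE('a) (V - {w}) k (link w S)" using link_spanning sp w by blast
  moreover have "card (V - {w}) \<ge> k + 2" using cV fV w by auto
  ultimately have "card (link w S) \<ge> k + 1" using count fV by blast
  then have "card {\<sigma>\<in>S. w\<in>\<sigma>} \<ge> k + 1" by (simp add: card_star)
  moreover have "card {\<sigma>\<in>S. w\<in>\<sigma>} \<le> card X" using card_mono[OF fX sub] .
  ultimately show False using cX by simp
qed




definition grel :: "'v set \<Rightarrow> ('v \<Rightarrow> 'v \<Rightarrow> bool) \<Rightarrow> ('v \<times> 'v) set" where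
  "grel W E = {(x, y). x \<in> W \<and> y \<in> W \<and> E x y}"

lemma graph_connected_grel: "graph_connected W E \<longleftrightarrow> (\<forall>u\<in>W. \<forall>v\<in>W. (u, v) \<in> (grel W E)\<^sup>*)"
  unfolding graph_connected_def grel_def by simp

lemma cob2:
  fixes f :: "nat set \<Rightarrow> 'a::field"
  assumes "a \<noteq> b"
  shows "cob f {a, b} = (if a < b then f {b} - f {a} else f {a} - f {b})"
proof -
  have "cob f {a, b} = face_sign {a,b} a * f ({a,b} - {a}) + face_sign {a,b} b * f ({a,b} - {b})"
    unfolding cob_def using assms by simp
  moreover have "{a,b} - {a} = {b}" "{a,b} - {b} = {a}" using assms by auto
  moreover have "{x\<in>{a,b}. x < a} = (if b < a then {b} else {})" "{x\<in>{a,b}. x < b} = (if a < b then {a} else {})"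
    by auto
  moreover have "face_sign {a,b} a = (if b < a then -1 else (1::'a))"
    unfolding face_sign_def by (cases "b < a") (simp_all only: \<open>{x\<in>{a,b}. x < a} = _\<close>, auto)
  moreover have "face_sign {a,b} b = (if a < b then -1 else (1::'a))"
    unfolding face_sign_def by (cases "a < b") (simp_all only: \<open>{x\<in>{a,b}. x < b} = _\<close>, auto)
  ultimately show ?thesis using assms by auto
qed

lemma base1:
  assumes sp: "spanning (TYPE('a::field)) V 1 S" and fV: "finite V" and s0: "\<sigma>0 \<in> S" and s: "\<sigma> \<in> S"
  shows "(\<sigma>0, \<sigma>) \<in> (grel S (facet_adj 1))\<^sup>*"
proof -
  let ?r = "grel S (facet_adj 1)"
  have SS: "S \<subseteq> smp V 1" using sp by (simp add: spanning_def)
  have adj: "(\<sigma>', \<sigma>'') \<in> ?r\<^sup>*" if "(\<sigma>0, \<sigma>') \<in> ?r\<^sup>*" "\<sigma>' \<in> S" "\<sigma>'' \<in> S" "u \<in> \<sigma>'" "u \<in> \<sigma>''" for \<sigma>' \<sigma>'' u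
  proof (cases "\<sigma>' = \<sigma>''")
    case False
    have c1: "card \<sigma>' = 2" "card \<sigma>'' = 2" using that SS by (auto simp: smp_def)
    have f1: "finite \<sigma>'" "finite \<sigma>''" using that SS smp_finite by blast+
    have "card (\<sigma>' \<inter> \<sigma>'') \<noteq> 0" using that f1 by auto
    moreover have "card (\<sigma>' \<inter> \<sigma>'') \<le> card \<sigma>'" using f1 by (simp add: card_mono)
    moreover have "card (\<sigma>' \<inter> \<sigma>'') \<noteq> 2"
    proof
      assume "card (\<sigma>' \<inter> \<sigma>'') = 2"
      then have "\<sigma>' \<inter> \<sigma>'' = \<sigma>'" "\<sigma>' \<inter> \<sigma>'' = \<sigma>''" using c1 f1
        by (metis Int_lower1 Int_lower2 card_subset_eq)+
      then show False using False by simp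
    qed
    ultimately have "card (\<sigma>' \<inter> \<sigma>'') = 1" using c1 by linarith
    then have "(\<sigma>', \<sigma>'') \<in> ?r" using that False by (simp add: grel_def facet_adj_def)
    then show ?thesis by blast
  qed simp
  define C where "C = {u. \<exists>\<sigma>'\<in>S. u \<in> \<sigma>' \<and> (\<sigma>0, \<sigma>') \<in> ?r\<^sup>*}"
  have Cclosed: "(\<sigma>0, \<sigma>'') \<in> ?r\<^sup>*" if uC: "u \<in> C" and h: "\<sigma>'' \<in> S" "u \<in> \<sigma>''" for u \<sigma>''
  proof -
    obtain \<sigma>' where "\<sigma>' \<in> S" "u \<in> \<sigma>'" "(\<sigma>0, \<sigma>') \<in> ?r\<^sup>*" using uC unfolding C_def by blast
    then show ?thesis using adj[of \<sigma>' \<sigma>'' u] h by (meson rtrancl_trans)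
  qed
  define f :: "nat set \<Rightarrow> 'a" where "f \<tau> = (if \<tau> \<subseteq> C then 1 else 0)" for \<tau>
  have two: "\<exists>a b. \<tau> = {a, b} \<and> a \<noteq> b" if "\<tau> \<in> smp V 1" for \<tau>
    using that by (auto simp: smp_def card_Suc_eq numeral_2_eq_2)
  have "\<forall>\<tau>\<in>S. cob f \<tau> = 0"
  proof
    fix \<tau> assume t: "\<tau> \<in> S"
    then obtain a b where ab: "\<tau> = {a, b}" "a \<noteq> b" using two SS by blast
    have "a \<in> C \<longleftrightarrow> b \<in> C"
    proof
      assume "a \<in> C"
      then have "(\<sigma>0, \<tau>) \<in> ?r\<^sup>*" using Cclosed t ab by blast
      then show "b \<in> C" using t ab C_def by blast
    next
      assume "b \<in> C"
      then have "(\<sigma>0, \<tau>) \<in> ?r\<^sup>*" using Cclosed t ab by blast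
      then show "a \<in> C" using t ab C_def by blast
    qed
    then show "cob f \<tau> = 0" using ab by (simp add: cob2 f_def)
  qed
  then have all: "\<forall>\<tau>\<in>smp V 1. cob f \<tau> = 0" using sp by (simp add: spanning_def)
  obtain a0 b0 where ab0: "\<sigma>0 = {a0, b0}" using two SS s0 by blast
  have a0C: "a0 \<in> C" using s0 ab0 C_def by blast
  have a0V: "a0 \<in> V" using s0 ab0 SS by (auto simp: smp_def)
  have VC: "u \<in> C" if "u \<in> V" for u
  proof (cases "u = a0")
    case False
    have "{a0, u} \<in> smp V 1" using False that a0V by (auto simp: smp_def)
    then have "cob f {a0, u} = 0" using all by blast
    then show ?thesis using False a0C by (auto simp: cob2 f_def split: if_splits)
  qed (use a0C in simp)
  obtain a b where ab: "\<sigma> = {a, b}" using two SS s by blast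
  have "a \<in> V" using s ab SS by (auto simp: smp_def)
  then show ?thesis using Cclosed[of a \<sigma>] VC s ab by blast
qed




lemma star_map:
  fixes v :: nat and m :: nat
  assumes "(\<tau>1, \<tau>2) \<in> (grel (link v S - Xv) (facet_adj m))\<^sup>*"
    and S: "\<And>\<tau>. \<tau> \<in> link v S - Xv \<Longrightarrow> insert v \<tau> \<in> R \<and> v \<notin> \<tau> \<and> finite \<tau>"
  shows "(insert v \<tau>1, insert v \<tau>2) \<in> (grel R (facet_adj (Suc m)))\<^sup>*"
  using assms(1)
proof (induction rule: rtrancl_induct)
  case (step y z)
  then have y: "y \<in> link v S - Xv" and z: "z \<in> link v S - Xv" and a: "facet_adj m y z"
    by (auto simp: grel_def)
  have vy: "v \<notin> y" "finite y" "insert v y \<in> R" and vz: "v \<notin> z" "finite z" "insert v z \<in> R"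
    using S[OF y] S[OF z] by auto
  have ne: "insert v y \<noteq> insert v z"
  proof
    assume "insert v y = insert v z"
    then have "insert v y - {v} = insert v z - {v}" by simp
    then have "y = z" using vy vz by simp
    then show False using a by (simp add: facet_adj_def)
  qed
  have "insert v y \<inter> insert v z = insert v (y \<inter> z)" by auto
  then have "card (insert v y \<inter> insert v z) = Suc m" using a vy by (simp add: facet_adj_def)
  then have "(insert v y, insert v z) \<in> grel R (facet_adj (Suc m))"
    using ne vy vz by (simp add: grel_def facet_adj_def)
  with step.IH show ?case by (rule rtrancl_into_rtrancl)
qed simp

lemma step:
  fixes m :: nat
  assumes IH: "\<And>V' S' X'. spanning (TYPE('a::field)) V' m S' \<Longrightarrow> finite V' \<Longrightarrow> card V' \<ge> m + 2 \<Longrightarrow>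
                 X' \<subseteq> S' \<Longrightarrow> card X' < m \<Longrightarrow> S' - X' \<noteq> {} \<and> graph_connected (S' - X') (facet_adj m)"
    and m1: "m \<ge> 1"
    and sp: "spanning (TYPE('a)) V (Suc m) S" and fV: "finite V" and cV: "card V \<ge> Suc m + 2"
    and XS: "X \<subseteq> S" and cX: "card X < Suc m"
  shows "S - X \<noteq> {} \<and> graph_connected (S - X) (facet_adj (Suc m))"
proof -
  let ?R = "S - X" and ?r = "grel (S - X) (facet_adj (Suc m))"
  have SS: "S \<subseteq> smp V (Suc m)" using sp by (simp add: spanning_def)
  have fS: "finite S" using spanning_finite sp fV by blast
  have fX: "finite X" using XS fS finite_subset by blast
  have ne: "S - X \<noteq> {}"
  proof
    assume "S - X = {}"
    then have "S \<subseteq> X" by blast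
    then have "card S \<le> card X" using fX card_mono by blast
    moreover have "card S \<ge> Suc m + 1" using count sp fV cV by blast
    ultimately show False using cX by simp
  qed
  define good where "good v \<longleftrightarrow> v \<in> V \<and> card {x\<in>X. v\<in>x} < m" for v
  have goodprop: "(\<forall>\<sigma>1\<in>?R. \<forall>\<sigma>2\<in>?R. v \<in> \<sigma>1 \<longrightarrow> v \<in> \<sigma>2 \<longrightarrow> (\<sigma>1, \<sigma>2) \<in> ?r\<^sup>*) \<and>
                  (\<forall>w\<in>V - {v}. \<exists>\<sigma>\<in>?R. v \<in> \<sigma> \<and> w \<in> \<sigma>)" if g: "good v" for v
  proof -
    have vV: "v \<in> V" using g good_def by auto
    define Xv where "Xv = (\<lambda>x. x - {v}) ` {x\<in>X. v\<in>x}"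
    have "card Xv \<le> card {x\<in>X. v\<in>x}" unfolding Xv_def by (rule card_image_le) (use fX in simp)
    then have cXv: "card Xv < m" using g unfolding good_def by simp
    have XvL: "Xv \<subseteq> link v S" using XS unfolding Xv_def link_def by auto
    have spL: "spanning TYPE('a) (V - {v}) m (link v S)" using link_spanning sp vV by blast
    have cVv: "card (V - {v}) \<ge> m + 2" using cV vV fV by auto
    have conn: "graph_connected (link v S - Xv) (facet_adj m)"
      using IH[OF spL _ cVv XvL cXv] fV by blast
    have into: "insert v \<tau> \<in> ?R \<and> v \<notin> \<tau> \<and> finite \<tau>" if t: "\<tau> \<in> link v S - Xv" for \<tau>
    proof -
      obtain \<sigma> where s: "\<sigma> \<in> S" "v \<in> \<sigma>" and ts: "\<tau> = \<sigma> - {v}" using t by (auto simp: link_def)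
      have e: "insert v \<tau> = \<sigma>" using s ts by auto
      have "\<sigma> \<notin> X" using t ts s unfolding Xv_def by auto
      moreover have "finite \<sigma>" using s SS smp_finite by blast
      ultimately show ?thesis using e s ts by auto
    qed
    have bk: "\<sigma> - {v} \<in> link v S - Xv" if s: "\<sigma> \<in> ?R" "v \<in> \<sigma>" for \<sigma>
    proof -
      have "\<sigma> - {v} \<in> link v S" using s by (auto simp: link_def)
      moreover have "\<sigma> - {v} \<notin> Xv"
      proof
        assume "\<sigma> - {v} \<in> Xv"
        then obtain x where "x \<in> X" "v \<in> x" "\<sigma> - {v} = x - {v}" unfolding Xv_def by auto
        then have "insert v (x - {v}) = insert v (\<sigma> - {v})" by simp
        then have "x = \<sigma>" using s \<open>v \<in> x\<close> by (simp add: insert_absorb)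
        then show False using s \<open>x \<in> X\<close> by auto
      qed
      ultimately show ?thesis by blast
    qed
    have P1: "\<forall>\<sigma>1\<in>?R. \<forall>\<sigma>2\<in>?R. v \<in> \<sigma>1 \<longrightarrow> v \<in> \<sigma>2 \<longrightarrow> (\<sigma>1, \<sigma>2) \<in> ?r\<^sup>*"
    proof (intro ballI impI)
      fix \<sigma>1 \<sigma>2 assume a: "\<sigma>1 \<in> ?R" "\<sigma>2 \<in> ?R" "v \<in> \<sigma>1" "v \<in> \<sigma>2"
      have "(\<sigma>1 - {v}, \<sigma>2 - {v}) \<in> (grel (link v S - Xv) (facet_adj m))\<^sup>*"
        using conn bk a unfolding graph_connected_grel by blast
      from star_map[OF this into] have "(insert v (\<sigma>1 - {v}), insert v (\<sigma>2 - {v})) \<in> ?r\<^sup>*" by blast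
      then show "(\<sigma>1, \<sigma>2) \<in> ?r\<^sup>*" using a by (simp add: insert_absorb)
    qed
    have P2: "\<forall>w\<in>V - {v}. \<exists>\<sigma>\<in>?R. v \<in> \<sigma> \<and> w \<in> \<sigma>"
    proof
      fix w assume w: "w \<in> V - {v}"
      obtain k where mk: "m = Suc k" using m1 by (cases m) auto
      have "\<exists>\<tau>\<in>link v S - Xv. w \<in> \<tau>"
        using cov[of "V - {v}" k "link v S" Xv w] spL mk fV cVv XvL cXv w by auto
      then obtain \<tau> where "\<tau> \<in> link v S - Xv" "w \<in> \<tau>" by blast
      then show "\<exists>\<sigma>\<in>?R. v \<in> \<sigma> \<and> w \<in> \<sigma>" using into by blast
    qed
    show ?thesis using P1 P2 by blast
  qed
  have hasgood: "\<exists>v\<in>\<sigma>. good v" if s: "\<sigma> \<in> ?R" for \<sigma>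
  proof (cases "X = {}")
    case True
    have sS: "\<sigma> \<in> smp V (Suc m)" using s SS by blast
    then have "card \<sigma> = Suc (Suc m)" "\<sigma> \<subseteq> V" by (simp_all add: smp_def)
    then have "\<sigma> \<noteq> {}" "\<sigma> \<subseteq> V" by auto
    then obtain v where v: "v \<in> \<sigma>" "v \<in> V" by blast
    have "card {x\<in>X. v\<in>x} = 0" using True by simp
    then show ?thesis using v m1 unfolding good_def by auto
  next
    case False
    then obtain x0 where x0: "x0 \<in> X" by blast
    have x0S: "x0 \<in> smp V (Suc m)" using x0 XS SS by blast
    have sS: "\<sigma> \<in> smp V (Suc m)" using s SS by blast
    have c: "card \<sigma> = card x0" using x0S sS by (simp add: smp_def)
    have fx0: "finite x0" using smp_finite[OF x0S] .
    have sV: "\<sigma> \<subseteq> V" using sS by (simp add: smp_def)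
    have "\<not> \<sigma> \<subseteq> x0"
    proof
      assume "\<sigma> \<subseteq> x0"
      then have "\<sigma> = x0" using c fx0 card_subset_eq by blast
      then show False using s x0 by simp
    qed
    then obtain v where v: "v \<in> \<sigma>" "v \<notin> x0" by blast
    have "{x\<in>X. v\<in>x} \<subseteq> X - {x0}" using v by auto
    then have "card {x\<in>X. v\<in>x} \<le> card (X - {x0})" using fX by (simp add: card_mono)
    also have "card (X - {x0}) = card X - 1" using x0 fX by (simp add: card_Diff_singleton)
    finally have "card {x\<in>X. v\<in>x} < m" using cX m1 by linarith
    moreover have "v \<in> V" using v sV by blast
    ultimately show ?thesis using v unfolding good_def by blast
  qed
  have "graph_connected ?R (facet_adj (Suc m))"
    unfolding graph_connected_grel
  proof (intro ballI)
    fix \<sigma>1 \<sigma>2 assume s1: "\<sigma>1 \<in> ?R" and s2: "\<sigma>2 \<in> ?R"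
    obtain v1 where v1: "v1 \<in> \<sigma>1" "good v1" using hasgood s1 by blast
    obtain v2 where v2: "v2 \<in> \<sigma>2" "good v2" using hasgood s2 by blast
    show "(\<sigma>1, \<sigma>2) \<in> ?r\<^sup>*"
    proof (cases "v1 = v2")
      case True then show ?thesis using goodprop[OF v1(2)] s1 s2 v1 v2 by blast
    next
      case False
      have "v2 \<in> V" using v2 good_def by auto
      then obtain \<sigma> where s: "\<sigma> \<in> ?R" "v1 \<in> \<sigma>" "v2 \<in> \<sigma>" using goodprop[OF v1(2)] False by blast
      have "(\<sigma>1, \<sigma>) \<in> ?r\<^sup>*" using goodprop[OF v1(2)] s1 s v1 by blast
      moreover have "(\<sigma>, \<sigma>2) \<in> ?r\<^sup>*" using goodprop[OF v2(2)] s2 s v2 by blast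
      ultimately show ?thesis by (rule rtrancl_trans)
    qed
  qed
  with ne show ?thesis by blast
qed


lemma conn:
  assumes "d \<ge> 1" "spanning (TYPE('a::field)) V d S" "finite V" "card V \<ge> d + 2" "X \<subseteq> S" "card X < d"
  shows "S - X \<noteq> {} \<and> graph_connected (S - X) (facet_adj d)"
  using assms
proof (induction d arbitrary: V S X)
  case 0 then show ?case by simp
next
  case (Suc m)
  show ?case
  proof (cases "m = 0")
    case True
    have fS: "finite S" using spanning_finite Suc.prems by blast
    have fX: "finite X" using Suc.prems(5) fS finite_subset by blast
    have X0: "X = {}" using Suc.prems(6) True fX by simp
    have sp1: "spanning TYPE('a) V 1 S" using Suc.prems(2) True by simp
    have "card S \<ge> 1 + 1" using count[OF sp1] Suc.prems True by simp
    then have "S \<noteq> {}" by auto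
    moreover have "graph_connected S (facet_adj 1)"
      unfolding graph_connected_grel using base1[OF sp1 Suc.prems(3)] by blast
    ultimately show ?thesis using X0 True by simp
  next
    case False
    then have m1: "m \<ge> 1" by simp
    show ?thesis
      by (rule step[OF _ m1 Suc.prems(2-6)]) (use Suc.IH m1 in blast)
  qed
qed

theorem theorem4p4:
  fixes d n :: nat and T :: "nat set set"
  assumes "d \<ge> 1" and "n \<ge> d + 2"
    and "hypertree TYPE('a::field) n d T"
  shows "k_connected T (facet_adj d) d"
proof -
  have sp: "spanning TYPE('a) {1..n} d T" using hypertree_spanning assms(3) by blast
  show ?thesis unfolding k_connected_def
  proof (intro allI impI)
    fix X assume X: "X \<subseteq> T \<and> finite X \<and> card X < d"
    show "T - X \<noteq> {} \<and> graph_connected (T - X) (facet_adj d)"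
      using conn[OF assms(1) sp _ _, of X] X assms(2) by simp
  qed
qed


end
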